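(* Let $D \in \mathbb{R}^{m \times n}$, let $Q \in \mathbb{Z}^{m\times n}$ be such that for each $j$ the $j$th column of $Q$ stores the sorting of the $j$th column of $D$, let $(a_1,\ldots,a_p)$ be a sequence of column indices of $D$, let $L$ be the ranking vector of the lexicographical sorting of the sub-matrix of $D$ determined by the sequence of columns $(a_1,\ldots,a_p)$, and let $i \in \{0,\ldots,n-1\}$. Then QuickLexSortRefine$(D,Q,i,L)$ returns the ranking vector $L'$ of the lexicographical sorting of the sub-matrix of $D$ determined by the sequence of columns $(a_1,\ldots,a_p,i)$.
   Context: Rows of $D$ are indexed by $\{0,\ldots,m-1\}$, columns by $\{0,\ldots,n-1\}$. "The $j$th column of $Q$ stores the sorting of the $j$th column of $D$" means $(Q_{0j},\ldots,Q_{m-1,j})$ is a permutation of $\{0,\ldots,m-1\}$ with $D_{Q_{0j},j} \le D_{Q_{1j},j} \le \cdots \le D_{Q_{m-1,j},j}$. For a sequence of columns $(b_1,\ldots,b_q)$, the sub-matrix determined by it has row $r$ equal to $(D_{r b_1},\ldots,D_{r b_q})$, and its rows are compared in lexicographic order: $v <_{\mathrm{lex}} w$ iff $v_1<w_1$, or $v_1=w_1,\ldots,v_k=w_k$ and $v_{k+1}<w_{k+1}$ for some $k$. The ranking vector of this ordering is the unique $L \in \{0,\ldots,m-1\}^m$ such that equal rows $r,s$ have $L_r = L_s$, rows with row $r$ lexicographically smaller than row $s$ have $L_r < L_s$, and $\sum_r L_r$ is minimal (equivalently, $L_r$ is the number of distinct rows of the sub-matrix that are lexicographically smaller than row $r$).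 For the empty sequence the ranking vector is the zero vector. QuickLexSortRefine$(D,Q,i,L)$ is the following procedure. Initialize integer arrays $\mathrm{IDval},\mathrm{IDvalInit},\mathrm{subID},\mathrm{newCount},\mathrm{numNewID}$ of length $m$ to zero. For $j=0,\ldots,m-1$: let $r := Q[j,i]$ and $\ell := L[r]$; if $\mathrm{IDvalInit}[\ell]=0$, set $\mathrm{IDvalInit}[\ell]:=1$ and $\mathrm{IDval}[\ell]:=D[r,i]$; otherwise, if $\mathrm{IDval}[\ell]\neq D[r,i]$, set $\mathrm{IDval}[\ell]:=D[r,i]$ and $\mathrm{newCount}[\ell]:=\mathrm{newCount}[\ell]+1$; in all cases then set $\mathrm{subID}[r]:=\mathrm{newCount}[\ell]$. Next set $\mathrm{numNewID}[m-1]:=\sum_{j=0}^{m-2}\mathrm{newCount}[j]$ and, for $j=m-2,m-3,\ldots,1$, $\mathrm{numNewID}[j]:=\mathrm{numNewID}[j+1]-\mathrm{newCount}[j]$ ($\mathrm{numNewID}[0]$ stays $0$). Finally, for $j=0,\ldots,m-1$ set $L'[j]:=L[j]+\mathrm{numNewID}[L[j]]+\mathrm{subID}[j]$, and return $L'$. *)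

theory Defs
  imports Main "HOL.Real"
begin

text \<open>Matrices are functions indexed by row and column: D r c is the entry in row r,
  column c. Only indices r < m, c < n are meaningful.\<close>

definition sub_row :: "(nat \<Rightarrow> nat \<Rightarrow> real) \<Rightarrow> nat list \<Rightarrow> nat \<Rightarrow> real list" where
  "sub_row D bs r = map (\<lambda>b. D r b) bs"

definition lex_less :: "real list \<Rightarrow> real list \<Rightarrow> bool" where
  "lex_less v w \<longleftrightarrow> (\<exists>k. k < length v \<and> k < length w \<and> take k v = take k w \<and> v ! k < w ! k)"

definition ranking :: "(nat \<Rightarrow> nat \<Rightarrow> real) \<Rightarrow> nat \<Rightarrow> nat list \<Rightarrow> nat \<Rightarrow> nat" where
  "ranking D m bs r = card {sub_row D bs s | s. s < m \<and> lex_less (sub_row D bs s) (sub_row D bs r)}"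

definition sorts_columns :: "(nat \<Rightarrow> nat \<Rightarrow> real) \<Rightarrow> (nat \<Rightarrow> nat \<Rightarrow> nat) \<Rightarrow> nat \<Rightarrow> nat \<Rightarrow> bool" where
  "sorts_columns D Q m n \<longleftrightarrow> (\<forall>j<n. bij_betw (\<lambda>k. Q k j) {..<m} {..<m} \<and>
       (\<forall>k. Suc k < m \<longrightarrow> D (Q k j) j \<le> D (Q (Suc k) j) j))"

text \<open>One iteration of the first loop; state = (IDval, IDvalInit, newCount, subID).\<close>
definition qlsr_step ::
  "(nat \<Rightarrow> nat \<Rightarrow> real) \<Rightarrow> (nat \<Rightarrow> nat \<Rightarrow> nat) \<Rightarrow> nat \<Rightarrow> (nat \<Rightarrow> nat) \<Rightarrow> nat \<Rightarrow>
   (nat \<Rightarrow> real) \<times> (nat \<Rightarrow> nat) \<times> (nat \<Rightarrow> nat) \<times> (nat \<Rightarrow> nat) \<Rightarrow>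
   (nat \<Rightarrow> real) \<times> (nat \<Rightarrow> nat) \<times> (nat \<Rightarrow> nat) \<times> (nat \<Rightarrow> nat)" where
  "qlsr_step D Q i L j st =
     (case st of (idval, init, nc, sub) \<Rightarrow>
       let r = Q j i; l = L r in
       if init l = 0 then (idval(l := D r i), init(l := 1), nc, sub(r := nc l))
       else if idval l \<noteq> D r i then
         (let nc' = nc(l := nc l + 1) in (idval(l := D r i), init, nc', sub(r := nc' l)))
       else (idval, init, nc, sub(r := nc l)))"

definition quick_lex_sort_refine ::
  "(nat \<Rightarrow> nat \<Rightarrow> real) \<Rightarrow> (nat \<Rightarrow> nat \<Rightarrow> nat) \<Rightarrow> nat \<Rightarrow> nat \<Rightarrow> (nat \<Rightarrow> nat) \<Rightarrow> (nat \<Rightarrow> nat)" where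
  "quick_lex_sort_refine D Q m i L =
     (case fold (qlsr_step D Q i L) [0..<m] (\<lambda>_. 0, \<lambda>_. 0, \<lambda>_. 0, \<lambda>_. 0) of
       (idval, init, nc, sub) \<Rightarrow>
         let nn0 = (\<lambda>_. 0)(m - 1 := (\<Sum>j<m - 1. nc j));
             nn = fold (\<lambda>j nn. nn(j := nn (j + 1) - nc j)) (rev [1..<m - 1]) nn0
         in (\<lambda>j. L j + nn (L j) + sub j))"

end

theory Submission imports Defs begin

lemma lex_less_Nil1[simp]: "\<not> lex_less [] w" by (simp add: lex_less_def)
lemma lex_less_Nil2[simp]: "\<not> lex_less v []" by (simp add: lex_less_def)

lemma lex_less_Cons: "lex_less (a#v) (b#w) \<longleftrightarrow> a < b \<or> (a = b \<and> lex_less v w)"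
proof
  assume "lex_less (a#v) (b#w)"
  then obtain k where k: "k < length (a#v)" "k < length (b#w)" "take k (a#v) = take k (b#w)" "(a#v)!k < (b#w)!k"
    unfolding lex_less_def by blast
  show "a < b \<or> (a = b \<and> lex_less v w)"
  proof (cases k)
    case 0 then show ?thesis using k by simp
  next
    case (Suc k') then show ?thesis using k unfolding lex_less_def by auto
  qed
next
  assume h: "a < b \<or> (a = b \<and> lex_less v w)"
  show "lex_less (a#v) (b#w)"
  proof (cases "a < b")
    case True then show ?thesis unfolding lex_less_def by (intro exI[of _ 0]) simp
  next
    case False
    then have "a = b" "lex_less v w" using h by auto
    then obtain k where "k < length v" "k < length w" "take k v = take k w" "v!k < w!k"
      unfolding lex_less_def by blast
    then show ?thesis unfolding lex_less_def using \<open>a = b\<close> by (intro exI[of _ "Suc k"]) simp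
  qed
qed

lemma lex_less_irrefl: "\<not> lex_less v v"
  by (induction v) (auto simp: lex_less_Cons)

lemma lex_less_trans: "lex_less u v \<Longrightarrow> lex_less v w \<Longrightarrow> lex_less u w"
proof (induction u arbitrary: v w)
  case Nil then show ?case by simp
next
  case (Cons a u)
  then obtain b v' where v: "v = b # v'" by (cases v) auto
  with Cons obtain c w' where w: "w = c # w'" by (cases w) auto
  show ?case using Cons v w by (auto simp: lex_less_Cons)
qed

lemma lex_less_total: "length v = length w \<Longrightarrow> v \<noteq> w \<Longrightarrow> lex_less v w \<or> lex_less w v"
proof (induction v arbitrary: w)
  case Nil then show ?case by simp
next
  case (Cons a v)
  then obtain b w' where w: "w = b # w'" by (cases w) auto
  show ?case using Cons w by (auto simp: lex_less_Cons)
qed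

lemma lex_less_snoc: "length v = length w \<Longrightarrow>
   lex_less (v @ [a]) (w @ [b]) \<longleftrightarrow> lex_less v w \<or> (v = w \<and> a < b)"
proof (induction v arbitrary: w)
  case Nil then show ?case by (simp add: lex_less_Cons)
next
  case (Cons c v)
  then obtain d w' where w: "w = d # w'" by (cases w) auto
  show ?case using Cons w by (auto simp: lex_less_Cons)
qed

lemma card_image_eqrel:
  assumes "\<forall>s\<in>T. \<forall>s'\<in>T. (f s = f s') = (g s = g s')"
  shows "card (f ` T) = card (g ` T)"
proof -
  let ?h = "\<lambda>p. f (inv_into T g p)"
  have 1: "f ` T = ?h ` (g ` T)"
  proof (rule set_eqI, rule iffI)
    fix y assume "y \<in> f ` T"
    then obtain s where s: "s \<in> T" "y = f s" by blast
    have "inv_into T g (g s) \<in> T" "g (inv_into T g (g s)) = g s"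
      using s by (auto intro: inv_into_into f_inv_into_f)
    then have "?h (g s) = y" using assms s by metis
    then show "y \<in> ?h ` (g ` T)" using s by blast
  next
    fix y assume "y \<in> ?h ` (g ` T)"
    then show "y \<in> f ` T" by (auto intro: inv_into_into)
  qed
  have 2: "inj_on ?h (g ` T)"
  proof (rule inj_onI)
    fix p q assume "p \<in> g ` T" "q \<in> g ` T" "?h p = ?h q"
    then show "p = q" using assms by (metis f_inv_into_f inv_into_into)
  qed
  show ?thesis using 1 2 by (simp add: card_image)
qed

lemma nn_fold:
  fixes nc :: "nat \<Rightarrow> nat"
  assumes "l \<le> M"
  shows "fold (\<lambda>j nn. nn(j := nn (j + 1) - nc j)) (rev [1..<M]) ((\<lambda>_. 0)(M := (\<Sum>j<M. nc j))) l
         = (\<Sum>j<l. nc j)"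
proof -
  let ?f = "\<lambda>j nn. nn(j := nn (j + 1) - nc j)"
  let ?n0 = "(\<lambda>_. 0)(M := (\<Sum>j<M. nc j)) :: nat \<Rightarrow> nat"
  have main: "\<forall>l. (k \<le> l \<and> l \<le> M \<longrightarrow> foldr ?f [k..<M] ?n0 l = (\<Sum>j<l. nc j))
              \<and> (l < k \<longrightarrow> foldr ?f [k..<M] ?n0 l = ?n0 l)" if "k \<le> M" "1 \<le> k" for k
    using that
  proof (induction "M - k" arbitrary: k)
    case 0 then have "k = M" by simp
    then show ?case by auto
  next
    case (Suc d)
    then have kM: "k < M" by simp
    have IH: "\<forall>l. (Suc k \<le> l \<and> l \<le> M \<longrightarrow> foldr ?f [Suc k..<M] ?n0 l = (\<Sum>j<l. nc j))
              \<and> (l < Suc k \<longrightarrow> foldr ?f [Suc k..<M] ?n0 l = ?n0 l)"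
      using Suc.hyps(1)[of "Suc k"] Suc.hyps(2) Suc.prems by simp
    have eq: "foldr ?f [k..<M] ?n0 = ?f k (foldr ?f [Suc k..<M] ?n0)"
      using kM by (simp add: upt_conv_Cons)
    have "foldr ?f [Suc k..<M] ?n0 (k+1) = (\<Sum>j<Suc k. nc j)" using IH kM by simp
    then have "?f k (foldr ?f [Suc k..<M] ?n0) k = (\<Sum>j<k. nc j)" by simp
    then show ?case using IH eq by (auto simp: le_Suc_eq)
  qed
  show ?thesis
  proof (cases "l = 0")
    case True
    then show ?thesis using main[of 1] by (cases "M = 0") (auto simp: foldr_conv_fold[symmetric])
  next
    case False
    then show ?thesis using main[of 1] assms by (auto simp: foldr_conv_fold[symmetric])
  qed
qed


lemma invariant_step:
  fixes idval :: "nat \<Rightarrow> real" and S :: "nat \<Rightarrow> real set" and S' :: "nat \<Rightarrow> real set"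
  assumes fin: "\<forall>l. finite (S l)"
    and I1: "\<forall>l. (init l = 0) = (S l = {})"
    and I2: "\<forall>l. S l \<noteq> {} \<longrightarrow> idval l = Max (S l)"
    and I3: "\<forall>l. nc l = card (S l) - 1"
    and I4: "\<forall>r\<in>P. sub r = card {y \<in> S (L r). y < x r}"
    and xinS: "\<forall>r\<in>P. x r \<in> S (L r)"
    and sorted: "\<forall>l. \<forall>y\<in>S l. y \<le> a"
    and rP: "r \<notin> P"
    and S': "S' = S(L r := insert a (S (L r)))"
    and st: "qlsr_step D Q i L j (idval, init, nc, sub) = (idval', init', nc', sub')"
    and r: "r = Q j i" and a: "a = D r i" and xr: "x r = a"
  shows "(\<forall>l. (init' l = 0) = (S' l = {})) \<and> (\<forall>l. S' l \<noteq> {} \<longrightarrow> idval' l = Max (S' l))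
     \<and> (\<forall>l. nc' l = card (S' l) - 1) \<and> (\<forall>q\<in>insert r P. sub' q = card {y \<in> S' (L q). y < x q})"
proof -
  let ?l = "L r"
  have fin': "finite (S ?l)" using fin by simp
  show ?thesis
  proof (cases "init ?l = 0")
    case True
    then have E: "S ?l = {}" using I1 by simp
    have "nc ?l = 0" using I3 E by simp
    have st': "idval' = idval(?l := a)" "init' = init(?l := 1)" "nc' = nc" "sub' = sub(r := nc ?l)"
      using st True r a unfolding qlsr_step_def by (auto simp: Let_def)
    have noP: "\<forall>q\<in>P. L q \<noteq> ?l" using xinS E by auto
    show ?thesis using st' S' E I1 I2 I3 I4 noP rP \<open>nc ?l = 0\<close> xr by auto
  next
    case False
    then have NE: "S ?l \<noteq> {}" using I1 by simp
    have M: "idval ?l = Max (S ?l)" using I2 NE by simp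
    have Mle: "Max (S ?l) \<le> a" using sorted NE fin' by simp
    show ?thesis
    proof (cases "idval ?l \<noteq> a")
      case True
      have st': "idval' = idval(?l := a)" "init' = init" "nc' = nc(?l := nc ?l + 1)"
        "sub' = sub(r := nc ?l + 1)"
        using st True False r a unfolding qlsr_step_def by (auto simp: Let_def)
      have Mlt: "Max (S ?l) < a" using True M Mle by simp
      have lt: "\<forall>y\<in>S ?l. y < a"
      proof
        fix y assume "y \<in> S ?l"
        then have "y \<le> Max (S ?l)" using fin' by simp
        then show "y < a" using Mlt by simp
      qed
      have anot: "a \<notin> S ?l" using lt by auto
      have cardS: "card (insert a (S ?l)) = card (S ?l) + 1" using anot fin' by simp
      have c0: "card (S ?l) \<ge> 1" using NE fin' by (simp add: Suc_le_eq card_gt_0_iff)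
      have Max': "Max (insert a (S ?l)) = a" using fin' NE Mle by simp
      have subr: "{y \<in> insert a (S ?l). y < a} = S ?l" using lt by auto
      have oth: "{y \<in> insert a (S ?l). y < x q} = {y \<in> S ?l. y < x q}" if "q \<in> P" "L q = ?l" for q
      proof -
        have "x q \<le> a" using sorted xinS that by auto
        then show ?thesis by auto
      qed
      show ?thesis
      proof (intro conjI)
        show "\<forall>l. (init' l = 0) = (S' l = {})" using st' S' I1 NE by auto
        show "\<forall>l. S' l \<noteq> {} \<longrightarrow> idval' l = Max (S' l)" using st' S' I2 Max' by auto
        show "\<forall>l. nc' l = card (S' l) - 1" using st' S' I3 cardS c0 by auto
        show "\<forall>q\<in>insert r P. sub' q = card {y \<in> S' (L q). y < x q}"
        proof
          fix q assume q: "q \<in> insert r P"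
          show "sub' q = card {y \<in> S' (L q). y < x q}"
          proof (cases "q = r")
            case True then show ?thesis using st' S' subr xr I3 c0 by simp
          next
            case qr: False
            then have "q \<in> P" using q by simp
            then show ?thesis using st' S' I4 oth qr by auto
          qed
        qed
      qed
    next
      case False2: False
      then have aeq: "idval ?l = a" by simp
      have st': "idval' = idval" "init' = init" "nc' = nc" "sub' = sub(r := nc ?l)"
        using st False False2 r a unfolding qlsr_step_def by (auto simp: Let_def)
      have ain: "a \<in> S ?l" using aeq M fin' NE by (metis Max_in)
      have ins: "insert a (S ?l) = S ?l" using ain by auto
      have S'eq: "S' = S" using S' ins by simp
      have lt: "{y \<in> S ?l. y < a} = S ?l - {a}"
      proof (rule set_eqI)
        fix y
        have "y \<in> S ?l \<Longrightarrow> y \<le> a" using sorted by auto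
        then show "y \<in> {y \<in> S ?l. y < a} \<longleftrightarrow> y \<in> S ?l - {a}" by auto
      qed
      have subr: "nc ?l = card {y \<in> S ?l. y < a}" using lt I3 ain fin' by simp
      show ?thesis using st' S'eq I1 I2 I3 I4 subr xr by auto
    qed
  qed
qed

theorem mainTheorem2:
  fixes D :: "nat \<Rightarrow> nat \<Rightarrow> real" and Q :: "nat \<Rightarrow> nat \<Rightarrow> nat"
    and m n i :: nat and as :: "nat list" and L :: "nat \<Rightarrow> nat"
  assumes "sorts_columns D Q m n"
    and "\<forall>a\<in>set as. a < n"
    and "\<forall>r<m. L r = ranking D m as r"
    and "i < n"
  shows "\<forall>r<m. quick_lex_sort_refine D Q m i L r = ranking D m (as @ [i]) r"
proof -
  have bij: "bij_betw (\<lambda>k. Q k i) {..<m} {..<m}"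
    and adj: "\<forall>k. Suc k < m \<longrightarrow> D (Q k i) i \<le> D (Q (Suc k) i) i"
    using assms(1,4) unfolding sorts_columns_def by auto
  have inj: "inj_on (\<lambda>k. Q k i) {..<m}" using bij by (simp add: bij_betw_def)
  have img: "(\<lambda>k. Q k i) ` {..<m} = {..<m}" using bij by (simp add: bij_betw_def)
  have mono: "D (Q k i) i \<le> D (Q j i) i" if "k \<le> j" "j < m" for k j
    using that
  proof (induction j rule: dec_induct)
    case base then show ?case by simp
  next
    case (step j)
    then have "D (Q j i) i \<le> D (Q (Suc j) i) i" using adj by simp
    then show ?case using step by simp
  qed
  define S where "S j l = (\<lambda>k. D (Q k i) i) ` {k. k < j \<and> L (Q k i) = l}" for j l
  define Inv where "Inv j st \<longleftrightarrow> (case st of (idval, init, nc, sub) \<Rightarrow>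
     (\<forall>l. (init l = (0::nat)) = (S j l = {})) \<and> (\<forall>l. S j l \<noteq> {} \<longrightarrow> idval l = Max (S j l))
     \<and> (\<forall>l. nc l = card (S j l) - 1) \<and> (\<forall>q\<in>(\<lambda>k. Q k i) ` {..<j}. sub q = card {y \<in> S j (L q). y < D q i}))"
    for j st
  define st0 where "st0 = ((\<lambda>_. 0) :: nat \<Rightarrow> real, (\<lambda>_. 0) :: nat \<Rightarrow> nat, (\<lambda>_. 0) :: nat \<Rightarrow> nat, (\<lambda>_. 0) :: nat \<Rightarrow> nat)"
  have inv: "Inv j (fold (qlsr_step D Q i L) [0..<j] st0)" if "j \<le> m" for j
    using that
  proof (induction j)
    case 0 then show ?case unfolding Inv_def S_def st0_def by simp
  next
    case (Suc j)
    then have jm: "j < m" by simp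
    obtain idval init nc sub where o1: "fold (qlsr_step D Q i L) [0..<j] st0 = (idval, init, nc, sub)"
      by (metis prod_cases4)
    obtain idval' init' nc' sub' where o2: "qlsr_step D Q i L j (idval, init, nc, sub) = (idval', init', nc', sub')"
      by (metis prod_cases4)
    have IH: "Inv j (idval, init, nc, sub)" using Suc o1 by simp
    have fin: "\<forall>l. finite (S j l)" unfolding S_def by simp
    have xinS: "\<forall>q\<in>(\<lambda>k. Q k i) ` {..<j}. D q i \<in> S j (L q)" unfolding S_def by auto
    have sorted: "\<forall>l. \<forall>y\<in>S j l. y \<le> D (Q j i) i" unfolding S_def using mono jm by auto
    have rP: "Q j i \<notin> (\<lambda>k. Q k i) ` {..<j}"
    proof
      assume "Q j i \<in> (\<lambda>k. Q k i) ` {..<j}"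
      then obtain k where "k < j" "Q k i = Q j i" by auto
      then show False using inj jm by (metis inj_on_eq_iff lessThan_iff less_trans nat_neq_iff)
    qed
    have S': "S (Suc j) = (S j)(L (Q j i) := insert (D (Q j i) i) (S j (L (Q j i))))"
    proof (rule ext)
      fix l show "S (Suc j) l = ((S j)(L (Q j i) := insert (D (Q j i) i) (S j (L (Q j i))))) l"
        unfolding S_def by (auto simp: less_Suc_eq)
    qed
    have step: "(\<forall>l. (init' l = 0) = (S (Suc j) l = {})) \<and> (\<forall>l. S (Suc j) l \<noteq> {} \<longrightarrow> idval' l = Max (S (Suc j) l))
     \<and> (\<forall>l. nc' l = card (S (Suc j) l) - 1) \<and> (\<forall>q\<in>insert (Q j i) ((\<lambda>k. Q k i) ` {..<j}). sub' q = card {y \<in> S (Suc j) (L q). y < D q i})"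
      apply (rule invariant_step[where x = "\<lambda>s. D s i" and P = "(\<lambda>k. Q k i) ` {..<j}", OF fin _ _ _ _ xinS sorted rP S' o2 refl refl refl])
      using IH unfolding Inv_def by auto
    have "insert (Q j i) ((\<lambda>k. Q k i) ` {..<j}) = (\<lambda>k. Q k i) ` {..<Suc j}" by (auto simp: lessThan_Suc)
    then have "Inv (Suc j) (idval', init', nc', sub')" using step unfolding Inv_def by simp
    then show ?case using o1 o2 by simp
  qed
  obtain idval init nc sub where ofin: "fold (qlsr_step D Q i L) [0..<m] st0 = (idval, init, nc, sub)"
    by (metis prod_cases4)
  have INV: "Inv m (idval, init, nc, sub)" using inv[of m] ofin by simp
  define Sf where "Sf l = (\<lambda>s. D s i) ` {s. s < m \<and> L s = l}" for l
  have SmSf: "S m l = Sf l" for l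
  proof -
    have "S m l = (\<lambda>s. D s i) ` ((\<lambda>k. Q k i) ` {k. k < m \<and> L (Q k i) = l})"
      unfolding S_def by (simp add: image_image)
    also have "(\<lambda>k. Q k i) ` {k. k < m \<and> L (Q k i) = l} = {s. s < m \<and> L s = l}"
      using img by auto
    finally show ?thesis unfolding Sf_def .
  qed
  have NC: "\<forall>l. nc l = card (Sf l) - 1" and SUB: "\<forall>q<m. sub q = card {y \<in> Sf (L q). y < D q i}"
    using INV img unfolding Inv_def SmSf by auto
  define vr where "vr s = sub_row D as s" for s
  define V where "V = vr ` {..<m}"
  define rk where "rk u = card {u' \<in> V. lex_less u' u}" for u
  have finV: "finite V" unfolding V_def by simp
  have lenvr: "length (vr s) = length as" for s unfolding vr_def sub_row_def by simp
  have Lr: "L r = rk (vr r)" if "r < m" for r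
  proof -
    have "{sub_row D as s |s. s < m \<and> lex_less (sub_row D as s) (sub_row D as r)} = {u' \<in> V. lex_less u' (vr r)}"
      unfolding V_def vr_def by auto
    then show ?thesis using assms(3) that unfolding ranking_def rk_def by simp
  qed
  have R1: "rk u < rk u'" if "u \<in> V" "lex_less u u'" for u u'
  proof -
    have "{u'' \<in> V. lex_less u'' u} \<subset> {u'' \<in> V. lex_less u'' u'}"
      using that lex_less_trans lex_less_irrefl by blast
    then show ?thesis unfolding rk_def using finV by (simp add: psubset_card_mono)
  qed
  have R2: "L r = L s \<longleftrightarrow> vr r = vr s" if "r < m" "s < m" for r s
  proof
    assume h: "L r = L s"
    show "vr r = vr s"
    proof (rule ccontr)
      assume "vr r \<noteq> vr s"
      then have "lex_less (vr r) (vr s) \<or> lex_less (vr s) (vr r)" using lex_less_total lenvr by metis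
      moreover have "vr r \<in> V" "vr s \<in> V" using that unfolding V_def by auto
      ultimately show False using R1 h Lr that by fastforce
    qed
  qed (use Lr that in simp)
  have R3: "L s < L r \<longleftrightarrow> lex_less (vr s) (vr r)" if "r < m" "s < m" for r s
  proof
    have VV: "vr r \<in> V" "vr s \<in> V" using that unfolding V_def by auto
    assume h: "L s < L r"
    show "lex_less (vr s) (vr r)"
    proof (rule ccontr)
      assume n: "\<not> lex_less (vr s) (vr r)"
      show False
      proof (cases "vr s = vr r")
        case True then show False using R2 that h by force
      next
        case False
        then have "lex_less (vr r) (vr s)" using n lex_less_total lenvr by metis
        then show False using R1 VV Lr that h by fastforce
      qed
    qed
  next
    assume "lex_less (vr s) (vr r)"
    then show "L s < L r" using R1 Lr that unfolding V_def by auto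
  qed
  have R5: "\<exists>s<m. L s = l" if "r < m" "l < L r" for r l
  proof -
    define A where "A = {u' \<in> V. lex_less u' (vr r)}"
    have AV: "A \<subseteq> V" unfolding A_def by auto
    have injrk: "inj_on rk V"
    proof (rule inj_onI)
      fix u u' assume "u \<in> V" "u' \<in> V" "rk u = rk u'"
      then show "u = u'" using R1 lex_less_total unfolding V_def by (metis imageE lenvr less_irrefl)
    qed
    have "card (rk ` A) = card A" using injrk AV by (simp add: card_image inj_on_subset)
    then have cA: "card (rk ` A) = L r" using Lr that unfolding A_def rk_def by simp
    have sub: "rk ` A \<subseteq> {..<L r}" using R1 Lr that unfolding A_def by auto
    have "rk ` A = {..<L r}" using card_subset_eq[OF _ sub] cA by simp
    then have "l \<in> rk ` A" using that by simp
    then obtain u where "u \<in> A" "rk u = l" by blast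
    then obtain s where "s < m" "u = vr s" unfolding A_def V_def by auto
    then show ?thesis using Lr \<open>rk u = l\<close> by auto
  qed
  have R4: "L r < m" if "r < m" for r
  proof -
    have "{u' \<in> V. lex_less u' (vr r)} \<subseteq> V - {vr r}" using lex_less_irrefl by auto
    then have "rk (vr r) \<le> card (V - {vr r})" unfolding rk_def using finV by (simp add: card_mono)
    also have "\<dots> < card V"
    proof -
      have "vr r \<in> V" using that unfolding V_def by simp
      then show ?thesis using card_Diff1_less[OF finV] by blast
    qed
    also have "\<dots> \<le> m" unfolding V_def using card_image_le[of "{..<m}" vr] by simp
    finally show ?thesis using Lr that by simp
  qed
  show ?thesis
  proof (intro allI impI)
    fix r assume r: "r < m"
    define T where "T = {s. s < m \<and> (L s < L r \<or> (L s = L r \<and> D s i < D r i))}"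
    have wdef: "sub_row D (as @ [i]) s = vr s @ [D s i]" for s unfolding vr_def sub_row_def by simp
    have "{sub_row D (as @ [i]) s |s. s < m \<and> lex_less (sub_row D (as @ [i]) s) (sub_row D (as @ [i]) r)}
       = (\<lambda>s. vr s @ [D s i]) ` T"
    proof -
      have key: "lex_less (vr s @ [D s i]) (vr r @ [D r i]) \<longleftrightarrow> (L s < L r \<or> (L s = L r \<and> D s i < D r i))"
        if "s < m" for s
        using lex_less_snoc[of "vr s" "vr r"] lenvr R2[OF that r] R3[OF r that] by simp
      show ?thesis unfolding wdef T_def using key by auto
    qed
    then have "ranking D m (as @ [i]) r = card ((\<lambda>s. vr s @ [D s i]) ` T)" unfolding ranking_def by simp
    also have "\<dots> = card ((\<lambda>s. (L s, D s i)) ` T)"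
      by (rule card_image_eqrel) (auto simp: T_def R2)
    also have "(\<lambda>s. (L s, D s i)) ` T = Sigma {..<L r} Sf \<union> ({L r} \<times> {y \<in> Sf (L r). y < D r i})"
    proof (rule set_eqI, rule iffI)
      fix p assume "p \<in> (\<lambda>s. (L s, D s i)) ` T"
      then show "p \<in> Sigma {..<L r} Sf \<union> ({L r} \<times> {y \<in> Sf (L r). y < D r i})"
        unfolding T_def Sf_def by auto
    next
      fix p assume "p \<in> Sigma {..<L r} Sf \<union> ({L r} \<times> {y \<in> Sf (L r). y < D r i})"
      then obtain s where "s < m" "p = (L s, D s i)" "L s < L r \<or> (L s = L r \<and> D s i < D r i)"
        unfolding Sf_def by auto
      then show "p \<in> (\<lambda>s. (L s, D s i)) ` T" unfolding T_def by auto
    qed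
    also have "card \<dots> = (\<Sum>l<L r. card (Sf l)) + card {y \<in> Sf (L r). y < D r i}"
      by (subst card_Un_disjoint) (auto simp: card_SigmaI Sf_def card_cartesian_product_singleton)
    also have "(\<Sum>l<L r. card (Sf l)) = (\<Sum>l<L r. nc l + 1)"
    proof (rule sum.cong)
      fix l assume "l \<in> {..<L r}"
      then obtain s where "s < m" "L s = l" using R5 r by auto
      then have "D s i \<in> Sf l" unfolding Sf_def by auto
      moreover have "finite (Sf l)" unfolding Sf_def by simp
      ultimately have "0 < card (Sf l)" using card_gt_0_iff by blast
      then have "card (Sf l) \<ge> 1" by simp
      then show "card (Sf l) = nc l + 1" using NC by simp
    qed simp
    finally have eq: "ranking D m (as @ [i]) r = (\<Sum>l<L r. nc l + 1) + card {y \<in> Sf (L r). y < D r i}" .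
    have new: "ranking D m (as @ [i]) r = L r + (\<Sum>l<L r. nc l) + sub r"
    proof -
      have g: "(\<Sum>l<k. nc l + 1) = (\<Sum>l<k. nc l) + k" for k by (induction k) auto
      have "(\<Sum>l<L r. nc l + 1) = (\<Sum>l<L r. nc l) + L r" by (rule g)
      then show "ranking D m (as @ [i]) r = L r + (\<Sum>l<L r. nc l) + sub r"
        using eq SUB r by simp
    qed
    have "quick_lex_sort_refine D Q m i L r = L r + (\<Sum>l<L r. nc l) + sub r"
      unfolding quick_lex_sort_refine_def using ofin[unfolded st0_def] nn_fold[of "L r" "m - 1" nc] R4[OF r]
      by (simp add: Let_def)
    then show "quick_lex_sort_refine D Q m i L r = ranking D m (as @ [i]) r" using new by simp
  qed
qed

end
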